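(* Let $\mathbb{F}_2$ be the free group on generators $a,b$, let $\ell\colon \mathbb{F}_2\to\mathbb{N}$ be the word length with respect to $\{a,a^{-1},b,b^{-1}\}$, let $\gamma_n(\mathbb{F}_2)$ denote the $n$-th term of the lower central series ($\gamma_1(\mathbb{F}_2)=\mathbb{F}_2$, $\gamma_{n+1}(\mathbb{F}_2)=[\gamma_n(\mathbb{F}_2),\mathbb{F}_2]$), and set $\alpha(n):=\min\{\ell(w)\mid w\in\gamma_n(\mathbb{F}_2)\setminus\{e\}\}$ and $\alpha:=\lim_{n\to\infty}\frac{\log_2(\alpha(n))}{\log_2(n)}$. Then $$\alpha\le \log_{\varphi}(2)=1.440\ldots,$$ where $\varphi=\frac{1+\sqrt5}{2}$ is the golden ratio; equivalently, $\alpha(n)\preceq n^{\log_\varphi(2)+\varepsilon}$ for all $\varepsilon>0$.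
   Context: The limit defining $\alpha$ is known to exist. For functions $f,g\colon\mathbb{N}\to\mathbb{R}$, $f(n)\preceq g(n)$ means there is a constant $C$ such that $f(n)\le C\,g(Cn)$ for all $n\in\mathbb{N}$. *)

theory Defs
  imports "HOL-Analysis.Analysis" "HOL-Algebra.Generated_Groups"
begin

text \<open>Letters of the alphabet {a, a^-1, b, b^-1}: the first component selects the
generator (False = a, True = b), the second says whether it is inverted.\<close>
type_synonym letter = "bool \<times> bool"

definition inv_letter :: "letter \<Rightarrow> letter" where
  "inv_letter x = (fst x, \<not> snd x)"

fun reduce :: "letter list \<Rightarrow> letter list" where
  "reduce [] = []"
| "reduce (x # xs) =
     (case reduce xs of
        [] \<Rightarrow> [x]
      | y # ys \<Rightarrow> (if y = inv_letter x then ys else x # y # ys))"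

definition F2 :: "letter list monoid" where
  "F2 = \<lparr> carrier = {w. reduce w = w},
          mult = (\<lambda>u v. reduce (u @ v)),
          one = [] \<rparr>"

definition word_length :: "letter list \<Rightarrow> nat" where
  "word_length g = (LEAST k. \<exists>xs. reduce xs = g \<and> length xs = k)"

definition comm_subgroup :: "letter list set \<Rightarrow> letter list set" where
  "comm_subgroup H = generate F2
     (\<Union>h\<in>H. \<Union>g\<in>carrier F2. {h \<otimes>\<^bsub>F2\<^esub> g \<otimes>\<^bsub>F2\<^esub> inv\<^bsub>F2\<^esub> h \<otimes>\<^bsub>F2\<^esub> inv\<^bsub>F2\<^esub> g})"

text \<open>Lower central series: gamma 1 = F_2, gamma (n+1) = [gamma n, F_2]
(gamma 0 is set to F_2 as well, it plays no role).\<close>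
fun gamma :: "nat \<Rightarrow> letter list set" where
  "gamma 0 = carrier F2"
| "gamma (Suc n) = (if n = 0 then carrier F2 else comm_subgroup (gamma n))"

definition alpha_seq :: "nat \<Rightarrow> nat" where
  "alpha_seq n = (LEAST k. \<exists>w \<in> gamma n - {\<one>\<^bsub>F2\<^esub>}. word_length w = k)"

definition golden_ratio :: real where
  "golden_ratio = (1 + sqrt 5) / 2"

end

theory Submission
  imports Defs "HOL-Real_Asymp.Real_Asymp"
begin


definition stp :: "letter \<Rightarrow> letter list \<Rightarrow> letter list" where
  "stp x r = (case r of [] \<Rightarrow> [x] | y # ys \<Rightarrow> (if y = inv_letter x then ys else x # y # ys))"

lemma reduce_Cons: "reduce (x # xs) = stp x (reduce xs)"
  by (simp add: stp_def)

lemma inv_letter_inv[simp]: "inv_letter (inv_letter x) = x"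
  by (simp add: inv_letter_def)

lemma inv_letter_neq[simp]: "inv_letter x \<noteq> x" "x \<noteq> inv_letter x"
  by (auto simp: inv_letter_def prod_eq_iff)

lemma inv_letter_eq_iff[simp]: "inv_letter x = inv_letter y \<longleftrightarrow> x = y"
  by (metis inv_letter_inv)

fun rd :: "letter list \<Rightarrow> bool" where
  "rd [] = True"
| "rd [x] = True"
| "rd (x # y # ys) = (y \<noteq> inv_letter x \<and> rd (y # ys))"

lemma rd_stp: "rd r \<Longrightarrow> rd (stp x r)"
  by (cases r rule: rd.cases) (auto simp: stp_def)

lemma rd_reduce: "rd (reduce w)"
  by (induction w) (auto simp: reduce_Cons rd_stp simp del: reduce.simps(2))

lemma reduce_rd: "rd w \<Longrightarrow> reduce w = w"
  by (induction w rule: rd.induct) auto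

lemma reduce_eq_iff: "reduce w = w \<longleftrightarrow> rd w"
  by (metis rd_reduce reduce_rd)

lemma reduce_reduce[simp]: "reduce (reduce w) = reduce w"
  by (simp add: reduce_rd rd_reduce)

lemma reduce_append: "reduce (u @ v) = foldr stp u (reduce v)"
  by (induction u) (auto simp: reduce_Cons simp del: reduce.simps)

lemma stp_stp: "rd r \<Longrightarrow> stp x (stp (inv_letter x) r) = r"
  by (cases r rule: rd.cases) (auto simp: stp_def)

lemma stp_stp': "rd r \<Longrightarrow> stp (inv_letter x) (stp x r) = r"
  using stp_stp[of r "inv_letter x"] by simp

lemma rd_foldr: "rd r \<Longrightarrow> rd (foldr stp u r)"
  by (induction u) (auto simp: rd_stp)

lemma foldr_stp: "rd w \<Longrightarrow> rd r \<Longrightarrow> foldr stp (stp x w) r = stp x (foldr stp w r)"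
proof (cases w)
  case (Cons y ys)
  assume "rd w" "rd r"
  show ?thesis
  proof (cases "y = inv_letter x")
    case True
    have "rd ys" using \<open>rd w\<close> Cons by (cases ys) auto
    have "stp x w = ys" using Cons True by (simp add: stp_def)
    then show ?thesis using Cons True \<open>rd r\<close> \<open>rd ys\<close>
      by (simp add: stp_stp rd_foldr)
  qed (use Cons in \<open>auto simp: stp_def\<close>)
qed (auto simp: stp_def)

lemma foldr_reduce: "rd r \<Longrightarrow> foldr stp (reduce u) r = foldr stp u r"
  by (induction u) (auto simp: reduce_Cons foldr_stp rd_reduce simp del: reduce.simps(2))

lemma reduce_append_reduce1: "reduce (reduce u @ v) = reduce (u @ v)"
  by (simp add: reduce_append foldr_reduce rd_reduce)

lemma reduce_append_reduce2: "reduce (u @ reduce v) = reduce (u @ v)"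
  by (simp add: reduce_append)

definition invl :: "letter list \<Rightarrow> letter list" where
  "invl w = rev (map inv_letter w)"

lemma reduce_invl: "reduce (invl w @ w) = []"
proof (induction w)
  case (Cons x xs)
  have "reduce (invl (x # xs) @ x # xs) = reduce (invl xs @ reduce (inv_letter x # x # xs))"
    by (simp add: invl_def reduce_append_reduce2 del: reduce.simps)
  also have "reduce (inv_letter x # x # xs) = reduce xs"
    by (simp add: reduce_Cons stp_stp' rd_reduce del: reduce.simps)
  finally show ?case using Cons by (simp add: reduce_append_reduce2 del: reduce.simps)
qed (simp add: invl_def)

lemma rd_append: "rd (u @ v) \<longleftrightarrow> rd u \<and> rd v \<and> (u = [] \<or> v = [] \<or> hd v \<noteq> inv_letter (last u))"
  by (induction u rule: rd.induct; cases v) auto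

lemma rd_invl: "rd (invl w) = rd w"
  unfolding invl_def by (induction w rule: rd.induct) (auto simp: rd_append)

lemma F2_group: "group F2"
proof (rule groupI)
  fix x assume x: "x \<in> carrier F2"
  show "\<exists>y\<in>carrier F2. y \<otimes>\<^bsub>F2\<^esub> x = \<one>\<^bsub>F2\<^esub>"
    by (rule bexI[of _ "invl x"]) (use x in \<open>auto simp: F2_def reduce_invl reduce_eq_iff rd_invl\<close>)
next
  fix x y z assume "x \<in> carrier F2" "y \<in> carrier F2" "z \<in> carrier F2"
  then show "x \<otimes>\<^bsub>F2\<^esub> y \<otimes>\<^bsub>F2\<^esub> z = x \<otimes>\<^bsub>F2\<^esub> (y \<otimes>\<^bsub>F2\<^esub> z)"
    by (simp add: F2_def reduce_append_reduce1 reduce_append_reduce2 del: reduce.simps)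
qed (auto simp: F2_def)

interpretation F: group F2 by (rule F2_group)

lemma F2_carrier: "w \<in> carrier F2 \<longleftrightarrow> rd w"
  by (simp add: F2_def reduce_eq_iff)

lemma F2_mult: "u \<otimes>\<^bsub>F2\<^esub> v = reduce (u @ v)" by (simp add: F2_def)
lemma F2_one: "\<one>\<^bsub>F2\<^esub> = []" by (simp add: F2_def)

lemma F2_inv: "rd w \<Longrightarrow> inv\<^bsub>F2\<^esub> w = invl w"
  by (rule F.inv_equality) (auto simp: F2_def reduce_invl reduce_eq_iff rd_invl)




abbreviation cm :: "letter list \<Rightarrow> letter list \<Rightarrow> letter list" where
  "cm h g \<equiv> h \<otimes>\<^bsub>F2\<^esub> g \<otimes>\<^bsub>F2\<^esub> inv\<^bsub>F2\<^esub> h \<otimes>\<^bsub>F2\<^esub> inv\<^bsub>F2\<^esub> g"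

definition cset :: "letter list set \<Rightarrow> letter list set" where
  "cset H = (\<Union>h\<in>H. \<Union>g\<in>carrier F2. {cm h g})"

lemma comm_subgroup_cset: "comm_subgroup H = generate F2 (cset H)"
  by (simp add: comm_subgroup_def cset_def)

lemma gamma_Suc: "n \<ge> 1 \<Longrightarrow> gamma (Suc n) = generate F2 (cset (gamma n))"
  by (simp add: comm_subgroup_cset)

lemma gamma_1: "gamma 1 = carrier F2" by simp

lemma gamma_Suc0: "gamma (Suc 0) = carrier F2" by simp

declare gamma.simps(2)[simp del]

lemma cset_carrier: "H \<subseteq> carrier F2 \<Longrightarrow> cset H \<subseteq> carrier F2"
  by (auto simp: cset_def)

lemma cm_in_cset: "x \<in> H \<Longrightarrow> y \<in> carrier F2 \<Longrightarrow> cm x y \<in> cset H"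
  unfolding cset_def by blast

lemma cset_E: "h \<in> cset H \<Longrightarrow> \<exists>x y. x \<in> H \<and> y \<in> carrier F2 \<and> h = cm x y"
  unfolding cset_def by blast

lemma canc1: "x \<in> carrier F2 \<Longrightarrow> y \<in> carrier F2 \<Longrightarrow> x \<otimes>\<^bsub>F2\<^esub> (inv\<^bsub>F2\<^esub> x \<otimes>\<^bsub>F2\<^esub> y) = y"
  by (simp add: F.m_assoc[symmetric])
lemma canc2: "x \<in> carrier F2 \<Longrightarrow> y \<in> carrier F2 \<Longrightarrow> inv\<^bsub>F2\<^esub> x \<otimes>\<^bsub>F2\<^esub> (x \<otimes>\<^bsub>F2\<^esub> y) = y"
  by (simp add: F.m_assoc[symmetric])

lemma gamma_normal: "gamma n \<lhd> F2"
proof (induction n)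
  case 0 then show ?case by (simp add: F.normal_invI F.subgroup_self)
next
  case (Suc n)
  show ?case
  proof (cases "n = 0")
    case True then show ?thesis by (simp add: gamma_Suc0 F.normal_invI F.subgroup_self)
  next
    case False
    have sub: "gamma n \<subseteq> carrier F2" using Suc.IH by (simp add: normal_imp_subgroup subgroup.subset)
    have "generate F2 (cset (gamma n)) \<lhd> F2"
    proof (rule F.normal_generateI[OF cset_carrier[OF sub]])
      fix h g assume h: "h \<in> cset (gamma n)" and g: "g \<in> carrier F2"
      then obtain x y where x: "x \<in> gamma n" and y: "y \<in> carrier F2" and hxy: "h = cm x y"
        using cset_E by blast
      have xc: "x \<in> carrier F2" using x sub by auto
      have "g \<otimes>\<^bsub>F2\<^esub> h \<otimes>\<^bsub>F2\<^esub> inv\<^bsub>F2\<^esub> g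
          = cm (g \<otimes>\<^bsub>F2\<^esub> x \<otimes>\<^bsub>F2\<^esub> inv\<^bsub>F2\<^esub> g) (g \<otimes>\<^bsub>F2\<^esub> y \<otimes>\<^bsub>F2\<^esub> inv\<^bsub>F2\<^esub> g)"
        using xc y g unfolding hxy apply (simp only: F.inv_mult_group F.inv_closed F.m_closed F.inv_inv)
  apply (simp only: F.m_assoc F.inv_closed F.m_closed)
  apply (simp only: canc1 canc2 F.inv_closed F.m_closed F.r_inv F.r_one F.l_inv F.l_one)
  done
      moreover have "g \<otimes>\<^bsub>F2\<^esub> x \<otimes>\<^bsub>F2\<^esub> inv\<^bsub>F2\<^esub> g \<in> gamma n"
        using Suc.IH x g by (simp add: normal.inv_op_closed2)
      ultimately show "g \<otimes>\<^bsub>F2\<^esub> h \<otimes>\<^bsub>F2\<^esub> inv\<^bsub>F2\<^esub> g \<in> cset (gamma n)"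
        using cm_in_cset[OF _ F.m_closed[OF F.m_closed[OF g y] F.inv_closed[OF g]]] by simp
    qed
    then show ?thesis using False by (simp add: gamma.simps comm_subgroup_cset)
  qed
qed

lemma gamma_subgroup: "subgroup (gamma n) F2"
  by (rule normal_imp_subgroup[OF gamma_normal])

lemma gamma_carrier: "x \<in> gamma n \<Longrightarrow> x \<in> carrier F2"
  by (rule subgroup.mem_carrier[OF gamma_subgroup])

lemma gamma_inv: "x \<in> gamma n \<Longrightarrow> inv\<^bsub>F2\<^esub> x \<in> gamma n"
  by (rule subgroup.m_inv_closed[OF gamma_subgroup])

lemma gamma_mult: "x \<in> gamma n \<Longrightarrow> y \<in> gamma n \<Longrightarrow> x \<otimes>\<^bsub>F2\<^esub> y \<in> gamma n"
  by (rule subgroup.m_closed[OF gamma_subgroup])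

lemma gamma_one: "\<one>\<^bsub>F2\<^esub> \<in> gamma n"
  by (rule subgroup.one_closed[OF gamma_subgroup])

lemma gamma_conj: "x \<in> gamma n \<Longrightarrow> g \<in> carrier F2 \<Longrightarrow> g \<otimes>\<^bsub>F2\<^esub> x \<otimes>\<^bsub>F2\<^esub> inv\<^bsub>F2\<^esub> g \<in> gamma n"
  by (rule normal.inv_op_closed2[OF gamma_normal])

lemma gamma_cm_G:
  assumes "n \<ge> 1" "x \<in> gamma n" "g \<in> carrier F2" shows "cm x g \<in> gamma (Suc n)"
proof -
  have "cm x g \<in> cset (gamma n)" using assms by (simp add: cm_in_cset)
  thus ?thesis unfolding gamma_Suc[OF assms(1)] by (rule generate.incl)
qed

lemma cm_inv: "x \<in> carrier F2 \<Longrightarrow> y \<in> carrier F2 \<Longrightarrow> inv\<^bsub>F2\<^esub> (cm x y) = cm y x"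
  apply (simp only: F.inv_mult_group F.inv_closed F.m_closed F.inv_inv)
  apply (simp only: F.m_assoc F.inv_closed F.m_closed)
  done

lemma hall_witt:
  assumes "g \<in> carrier F2" "h \<in> carrier F2" "x \<in> carrier F2"
  shows "(h \<otimes>\<^bsub>F2\<^esub> cm (cm (inv\<^bsub>F2\<^esub> h) x) (inv\<^bsub>F2\<^esub> g) \<otimes>\<^bsub>F2\<^esub> inv\<^bsub>F2\<^esub> h)
    \<otimes>\<^bsub>F2\<^esub> (inv\<^bsub>F2\<^esub> g \<otimes>\<^bsub>F2\<^esub> cm (cm g h) x \<otimes>\<^bsub>F2\<^esub> g)
    \<otimes>\<^bsub>F2\<^esub> (x \<otimes>\<^bsub>F2\<^esub> cm (cm (inv\<^bsub>F2\<^esub> x) (inv\<^bsub>F2\<^esub> g)) h \<otimes>\<^bsub>F2\<^esub> inv\<^bsub>F2\<^esub> x) = \<one>\<^bsub>F2\<^esub>"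
  using assms apply (simp only: F.inv_mult_group F.inv_closed F.m_closed F.inv_inv)
  apply (simp only: F.m_assoc F.inv_closed F.m_closed)
  apply (simp only: canc1 canc2 F.inv_closed F.m_closed F.r_inv F.r_one F.l_inv F.l_one)
  done

lemma solve3:
  assumes "a \<in> carrier F2" "b \<in> carrier F2" "c \<in> carrier F2"
    "a \<otimes>\<^bsub>F2\<^esub> b \<otimes>\<^bsub>F2\<^esub> c = \<one>\<^bsub>F2\<^esub>"
  shows "b = inv\<^bsub>F2\<^esub> a \<otimes>\<^bsub>F2\<^esub> inv\<^bsub>F2\<^esub> c"
proof -
  have "inv\<^bsub>F2\<^esub> a \<otimes>\<^bsub>F2\<^esub> (a \<otimes>\<^bsub>F2\<^esub> b \<otimes>\<^bsub>F2\<^esub> c) \<otimes>\<^bsub>F2\<^esub> inv\<^bsub>F2\<^esub> c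
     = inv\<^bsub>F2\<^esub> a \<otimes>\<^bsub>F2\<^esub> inv\<^bsub>F2\<^esub> c" using assms by simp
  thus ?thesis using assms(1-3) by (simp add: F.m_assoc canc2)
qed

lemma degree_step:
  assumes IH: "\<forall>i\<ge>1. \<forall>x\<in>gamma i. \<forall>z\<in>gamma j. cm x z \<in> gamma (i+j)"
    and j: "j \<ge> 1" and i: "i \<ge> 1" and x: "x \<in> gamma i"
  shows "s \<in> cset (gamma j) \<Longrightarrow> cm s x \<in> gamma (i + Suc j)"
proof -
  assume "s \<in> cset (gamma j)"
  then obtain g h where g: "g \<in> gamma j" and h: "h \<in> carrier F2" and s: "s = cm g h"
    using cset_E by blast
  have gc: "g \<in> carrier F2" using g gamma_carrier by blast
  have xc: "x \<in> carrier F2" using x gamma_carrier by blast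
  define T2 where "T2 = h \<otimes>\<^bsub>F2\<^esub> cm (cm (inv\<^bsub>F2\<^esub> h) x) (inv\<^bsub>F2\<^esub> g) \<otimes>\<^bsub>F2\<^esub> inv\<^bsub>F2\<^esub> h"
  define T1 where "T1 = inv\<^bsub>F2\<^esub> g \<otimes>\<^bsub>F2\<^esub> cm (cm g h) x \<otimes>\<^bsub>F2\<^esub> g"
  define T3 where "T3 = x \<otimes>\<^bsub>F2\<^esub> cm (cm (inv\<^bsub>F2\<^esub> x) (inv\<^bsub>F2\<^esub> g)) h \<otimes>\<^bsub>F2\<^esub> inv\<^bsub>F2\<^esub> x"
  have e: "T2 \<otimes>\<^bsub>F2\<^esub> T1 \<otimes>\<^bsub>F2\<^esub> T3 = \<one>\<^bsub>F2\<^esub>"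
    unfolding T1_def T2_def T3_def by (rule hall_witt[OF gc h xc])
  have c1: "cm x (inv\<^bsub>F2\<^esub> h) \<in> gamma (Suc i)" using gamma_cm_G[OF i x F.inv_closed[OF h]] .
  have c2: "cm (inv\<^bsub>F2\<^esub> h) x \<in> gamma (Suc i)" using gamma_inv[OF c1] unfolding cm_inv[OF xc F.inv_closed[OF h]] .
  have "cm (cm (inv\<^bsub>F2\<^esub> h) x) (inv\<^bsub>F2\<^esub> g) \<in> gamma (Suc i + j)"
    by (rule IH[rule_format]) (use c2 g gamma_inv in auto)
  hence T2: "T2 \<in> gamma (i + Suc j)" unfolding T2_def using gamma_conj h by simp
  have "cm (inv\<^bsub>F2\<^esub> x) (inv\<^bsub>F2\<^esub> g) \<in> gamma (i + j)"
    by (rule IH[rule_format]) (use i x g gamma_inv in auto)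
  hence "cm (cm (inv\<^bsub>F2\<^esub> x) (inv\<^bsub>F2\<^esub> g)) h \<in> gamma (Suc (i + j))"
    using gamma_cm_G i h by simp
  hence T3: "T3 \<in> gamma (i + Suc j)" unfolding T3_def using gamma_conj xc by simp
  have T1: "T1 = inv\<^bsub>F2\<^esub> T2 \<otimes>\<^bsub>F2\<^esub> inv\<^bsub>F2\<^esub> T3"
  proof (rule solve3[OF _ _ _ e])
    show "T2 \<in> carrier F2" using T2 by (rule gamma_carrier)
    show "T3 \<in> carrier F2" using T3 by (rule gamma_carrier)
    show "T1 \<in> carrier F2" unfolding T1_def using gc h xc by (simp only: F.m_closed F.inv_closed)
  qed
  hence T1g: "T1 \<in> gamma (i + Suc j)" using T2 T3 gamma_inv gamma_mult by simp
  have "cm s x = g \<otimes>\<^bsub>F2\<^esub> T1 \<otimes>\<^bsub>F2\<^esub> inv\<^bsub>F2\<^esub> g"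
    unfolding T1_def s using gc h xc apply (simp only: F.inv_mult_group F.inv_closed F.m_closed F.inv_inv)
  apply (simp only: F.m_assoc F.inv_closed F.m_closed)
  apply (simp only: canc1 canc2 F.inv_closed F.m_closed F.r_inv F.r_one F.l_inv F.l_one)
  done
  thus ?thesis using gamma_conj[OF T1g gc] by simp
qed

lemma degree_step2:
  assumes IH: "\<forall>i\<ge>1. \<forall>x\<in>gamma i. \<forall>z\<in>gamma j. cm x z \<in> gamma (i+j)"
    and j: "j \<ge> 1" and i: "i \<ge> 1" and x: "x \<in> gamma i"
  shows "z \<in> generate F2 (cset (gamma j)) \<Longrightarrow> cm z x \<in> gamma (i + Suc j)"
proof (induction z rule: generate.induct)
  case one
  then show ?case using x gamma_carrier[OF x] gamma_one by simp
next
  case (incl h)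
  then show ?case using degree_step[OF IH j i x] by blast
next
  case (inv h)
  have hc: "h \<in> carrier F2" using inv cset_carrier gamma_subgroup subgroup.subset by blast
  have xc: "x \<in> carrier F2" using x gamma_carrier by blast
  have c1: "cm h x \<in> gamma (i + Suc j)" using degree_step[OF IH j i x inv] .
  have "cm x h \<in> gamma (i + Suc j)" using gamma_inv[OF c1] unfolding cm_inv[OF hc xc] .
  hence "inv\<^bsub>F2\<^esub> h \<otimes>\<^bsub>F2\<^esub> cm x h \<otimes>\<^bsub>F2\<^esub> inv\<^bsub>F2\<^esub> (inv\<^bsub>F2\<^esub> h) \<in> gamma (i + Suc j)"
    using gamma_conj hc by blast
  moreover have "inv\<^bsub>F2\<^esub> h \<otimes>\<^bsub>F2\<^esub> cm x h \<otimes>\<^bsub>F2\<^esub> inv\<^bsub>F2\<^esub> (inv\<^bsub>F2\<^esub> h) = cm (inv\<^bsub>F2\<^esub> h) x"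
    using hc xc apply (simp only: F.inv_mult_group F.inv_closed F.m_closed F.inv_inv)
  apply (simp only: F.m_assoc F.inv_closed F.m_closed)
  apply (simp only: canc1 canc2 F.inv_closed F.m_closed F.r_inv F.r_one F.l_inv F.l_one)
  done
  ultimately show ?case by simp
next
  case (eng u v)
  have sub: "cset (gamma j) \<subseteq> carrier F2" using cset_carrier gamma_subgroup subgroup.subset by blast
  have uc: "u \<in> carrier F2" "v \<in> carrier F2" using eng F.generate_in_carrier[OF sub] by blast+
  have xc: "x \<in> carrier F2" using x gamma_carrier by blast
  have "cm (u \<otimes>\<^bsub>F2\<^esub> v) x = (u \<otimes>\<^bsub>F2\<^esub> cm v x \<otimes>\<^bsub>F2\<^esub> inv\<^bsub>F2\<^esub> u) \<otimes>\<^bsub>F2\<^esub> cm u x"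
    using uc xc apply (simp only: F.inv_mult_group F.inv_closed F.m_closed F.inv_inv)
  apply (simp only: F.m_assoc F.inv_closed F.m_closed)
  apply (simp only: canc1 canc2 F.inv_closed F.m_closed F.r_inv F.r_one F.l_inv F.l_one)
  done
  moreover have "u \<otimes>\<^bsub>F2\<^esub> cm v x \<otimes>\<^bsub>F2\<^esub> inv\<^bsub>F2\<^esub> u \<in> gamma (i + Suc j)"
    using gamma_conj eng uc by blast
  ultimately show ?case using gamma_mult eng by simp
qed

lemma degree: "j \<ge> 1 \<Longrightarrow> \<forall>i\<ge>1. \<forall>x\<in>gamma i. \<forall>z\<in>gamma j. cm x z \<in> gamma (i+j)"
proof (induction j rule: nat_induct_at_least)
  case base
  show ?case
  proof (intro allI impI ballI)
    fix i x z assume i: "1 \<le> i" and x: "x \<in> gamma i" and z: "z \<in> gamma 1"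
    have "cm x z \<in> gamma (Suc i)" by (rule gamma_cm_G[OF i x]) (use z gamma_1 in simp)
    thus "cm x z \<in> gamma (i + 1)" by simp
  qed
next
  case (Suc j)
  note j = Suc(1) and IH = Suc(2)
  show ?case
  proof (intro allI impI ballI)
    fix i x z assume i: "1 \<le> i" and x: "x \<in> gamma i" and z: "z \<in> gamma (Suc j)"
    have z': "z \<in> generate F2 (cset (gamma j))" using z unfolding gamma_Suc[OF j] .
    have c1: "cm z x \<in> gamma (i + Suc j)"
      by (rule degree_step2[OF IH j i x z'])
    show "cm x z \<in> gamma (i + Suc j)"
      using gamma_inv[OF c1] unfolding cm_inv[OF gamma_carrier[OF z] gamma_carrier[OF x]] by (simp add: add.commute)
  qed
qed




definition la :: letter where "la = (False, False)"
definition lA :: letter where "lA = (False, True)"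
definition lb :: letter where "lb = (True, False)"
definition lB :: letter where "lB = (True, True)"

fun P :: "nat \<Rightarrow> letter list \<times> letter list" where
  "P 0 = ([la, lb], [lb, la])"
| "P (Suc k) = (snd (P k) @ invl (fst (P k)), invl (fst (P k)) @ snd (P k))"

fun Yw :: "nat \<Rightarrow> letter list" where
  "Yw 0 = [la]"
| "Yw (Suc k) = fst (P k)"

fun d :: "nat \<Rightarrow> nat" where
  "d 0 = 1"
| "d (Suc 0) = 1"
| "d (Suc (Suc k)) = d (Suc k) + d k"

definition pat :: "nat \<Rightarrow> letter \<times> letter \<times> letter \<times> letter" where
  "pat k = (if k mod 3 = 0 then (la, lb, lb, la) else if k mod 3 = 1 then (lb, lA, lB, la) else (lB, lB, la, la))"

lemma hd_invl: "w \<noteq> [] \<Longrightarrow> hd (invl w) = inv_letter (last w)"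
  by (simp add: invl_def hd_rev last_map)

lemma last_invl: "w \<noteq> [] \<Longrightarrow> last (invl w) = inv_letter (hd w)"
  by (simp add: invl_def last_rev hd_map)

lemma invl_nil: "invl w = [] \<longleftrightarrow> w = []"
  by (simp add: invl_def)

lemma length_invl: "length (invl w) = length w"
  by (simp add: invl_def)

lemma P_inv: "rd (fst (P k)) \<and> rd (snd (P k)) \<and> fst (P k) \<noteq> [] \<and> snd (P k) \<noteq> []
  \<and> (hd (fst (P k)), last (fst (P k)), hd (snd (P k)), last (snd (P k))) = pat k"
proof (induction k)
  case 0
  then show ?case by (simp add: pat_def la_def lb_def inv_letter_def)
next
  case (Suc k)
  obtain Y C where YC: "P k = (Y, C)" by fastforce
  have I: "rd Y" "rd C" "Y \<noteq> []" "C \<noteq> []" "(hd Y, last Y, hd C, last C) = pat k"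
    using Suc YC by auto
  have m: "k mod 3 = 0 \<or> k mod 3 = 1 \<or> k mod 3 = 2" by auto
  have ms: "Suc k mod 3 = (if k mod 3 = 2 then 0 else Suc (k mod 3))"
    by (simp add: mod_Suc)
  show ?case using I m
    apply (simp add: YC rd_append rd_invl hd_invl last_invl invl_nil ms)
    apply (elim disjE)
    apply (simp_all add: pat_def la_def lA_def lb_def lB_def inv_letter_def mod_Suc)
    done
qed

lemma P_len: "length (fst (P k)) = 2 ^ Suc k \<and> length (snd (P k)) = 2 ^ Suc k"
  by (induction k) (auto simp: length_invl)

lemma Yw_rd: "rd (Yw k)"
  using P_inv by (cases k) auto

lemma Yw_ne: "Yw k \<noteq> []"
  using P_inv by (cases k) auto

lemma Yw_len: "length (Yw k) = 2 ^ k"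
  using P_len by (cases k) auto

lemma Yw_carrier: "Yw k \<in> carrier F2"
  using Yw_rd F2_carrier by blast

lemma C_carrier: "snd (P k) \<in> carrier F2"
  using P_inv F2_carrier by blast

lemma Y_rec: "Yw (Suc (Suc k)) = snd (P k) \<otimes>\<^bsub>F2\<^esub> inv\<^bsub>F2\<^esub> (Yw (Suc k))"
proof -
  have "rd (snd (P k) @ invl (fst (P k)))" using P_inv[of "Suc k"] by simp
  thus ?thesis using P_inv[of k] by (simp add: F2_mult F2_inv reduce_rd)
qed

lemma C_rec: "snd (P (Suc k)) = inv\<^bsub>F2\<^esub> (Yw (Suc k)) \<otimes>\<^bsub>F2\<^esub> snd (P k)"
proof -
  have "rd (invl (fst (P k)) @ snd (P k))" using P_inv[of "Suc k"] by simp
  thus ?thesis using P_inv[of k] by (simp add: F2_mult F2_inv reduce_rd)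
qed

lemma C_conj: "snd (P k) = inv\<^bsub>F2\<^esub> (Yw k) \<otimes>\<^bsub>F2\<^esub> Yw (Suc k) \<otimes>\<^bsub>F2\<^esub> Yw k"
proof (cases k)
  case 0
  then show ?thesis
    by (simp add: F2_mult F2_inv invl_def la_def lb_def inv_letter_def)
next
  case (Suc m)
  have "inv\<^bsub>F2\<^esub> (Yw k) \<otimes>\<^bsub>F2\<^esub> Yw (Suc k) \<otimes>\<^bsub>F2\<^esub> Yw k
      = inv\<^bsub>F2\<^esub> (Yw (Suc m)) \<otimes>\<^bsub>F2\<^esub> (snd (P m) \<otimes>\<^bsub>F2\<^esub> inv\<^bsub>F2\<^esub> (Yw (Suc m))) \<otimes>\<^bsub>F2\<^esub> Yw (Suc m)"
    using Suc Y_rec by simp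
  also have "\<dots> = inv\<^bsub>F2\<^esub> (Yw (Suc m)) \<otimes>\<^bsub>F2\<^esub> snd (P m)"
    using Yw_carrier[of "Suc m"] C_carrier[of m]
    by (simp add: F.m_assoc)
  finally show ?thesis using Suc C_rec by simp
qed

lemma Y_cm: "Yw (Suc (Suc k)) = cm (inv\<^bsub>F2\<^esub> (Yw k)) (Yw (Suc k))"
proof -
  have "Yw (Suc (Suc k)) = (inv\<^bsub>F2\<^esub> (Yw k) \<otimes>\<^bsub>F2\<^esub> Yw (Suc k) \<otimes>\<^bsub>F2\<^esub> Yw k) \<otimes>\<^bsub>F2\<^esub> inv\<^bsub>F2\<^esub> (Yw (Suc k))"
    using Y_rec C_conj by simp
  thus ?thesis using Yw_carrier[of k] by simp
qed

lemma d_pos: "d k \<ge> 1"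
  by (induction k rule: d.induct) auto

lemma Yw_gamma: "Yw k \<in> gamma (d k)"
proof (induction k rule: d.induct)
  case 1 then show ?case using Yw_carrier[of 0] by (simp add: gamma_1 gamma_Suc0)
next
  case 2 then show ?case using Yw_carrier[of 1] by (simp add: gamma_1 gamma_Suc0)
next
  case (3 k)
  have "cm (inv\<^bsub>F2\<^esub> (Yw k)) (Yw (Suc k)) \<in> gamma (d k + d (Suc k))"
    using degree[OF d_pos[of "Suc k"]] d_pos[of k] gamma_inv[OF "3.IH"(2)] "3.IH"(1) by blast
  thus ?case using Y_cm by (simp add: add.commute)
qed

lemma word_length_le: "reduce xs = g \<Longrightarrow> word_length g \<le> length xs"
  unfolding word_length_def by (rule Least_le) blast

lemma alpha_bound: "alpha_seq (d k) \<le> 2 ^ k"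
proof -
  have w: "Yw k \<in> gamma (d k) - {\<one>\<^bsub>F2\<^esub>}" using Yw_gamma Yw_ne by (simp add: F2_one)
  have "word_length (Yw k) \<le> 2 ^ k"
    using word_length_le[of "Yw k" "Yw k"] Yw_rd reduce_rd Yw_len by simp
  moreover have "alpha_seq (d k) \<le> word_length (Yw k)"
    unfolding alpha_seq_def by (rule Least_le) (use w in blast)
  ultimately show ?thesis by simp
qed




lemma gr_gt1: "golden_ratio > 1"
proof -
  have "sqrt 5 > 1" by simp
  thus ?thesis by (simp add: golden_ratio_def)
qed

lemma gr_le2: "golden_ratio \<le> 2"
proof -
  have "sqrt 5 \<le> 3" by (rule real_le_lsqrt) auto
  thus ?thesis by (simp add: golden_ratio_def)
qed

lemma gr_sq: "golden_ratio ^ 2 = golden_ratio + 1"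
  by (simp add: golden_ratio_def power2_eq_square field_simps)

lemma d_ge: "golden_ratio ^ k \<le> real (d (Suc k)) \<and> golden_ratio ^ Suc k \<le> real (d (Suc (Suc k)))"
proof (induction k)
  case 0
  then show ?case using gr_le2 by simp
next
  case (Suc k)
  have "golden_ratio ^ Suc (Suc k) = (golden_ratio * golden_ratio) * golden_ratio ^ k"
    by (simp add: mult.assoc)
  also have "\<dots> = (golden_ratio + 1) * golden_ratio ^ k" using gr_sq by (simp add: power2_eq_square)
  also have "\<dots> = golden_ratio ^ Suc k + golden_ratio ^ k" by (simp add: algebra_simps)
  also have "\<dots> \<le> real (d (Suc (Suc k))) + real (d (Suc k))" using Suc by simp
  finally show ?case using Suc by simp
qed

lemma d_strict: "strict_mono (\<lambda>k. d (Suc (Suc k)))"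
proof (rule strict_mono_Suc_iff[THEN iffD2], intro allI)
  fix k show "d (Suc (Suc k)) < d (Suc (Suc (Suc k)))" using d_pos[of "Suc k"] by simp
qed

lemma log_alpha_le: "log 2 (real (alpha_seq (d k))) \<le> real k"
proof (cases "alpha_seq (d k) = 0")
  case True then show ?thesis by (simp add: log_def)
next
  case False
  have "log 2 (real (alpha_seq (d k))) \<le> log 2 (2 ^ k)"
    using alpha_bound[of k] False by (subst log_le_cancel_iff) (auto simp: of_nat_le_iff[symmetric])
  thus ?thesis by (simp add: log_nat_power)
qed

theorem theorem1p1:
  assumes "convergent (\<lambda>n. log 2 (real (alpha_seq n)) / log 2 (real n))"
  shows "lim (\<lambda>n. log 2 (real (alpha_seq n)) / log 2 (real n)) \<le> log golden_ratio 2"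
proof -
  define X where "X = (\<lambda>n. log 2 (real (alpha_seq n)) / log 2 (real n))"
  define c where "c = log 2 golden_ratio"
  have c: "c > 0" using gr_gt1 by (simp add: c_def)
  have L: "X \<longlonglongrightarrow> lim X" using assms convergent_LIMSEQ_iff X_def by blast
  have L2: "(\<lambda>k. X (d (Suc (Suc k)))) \<longlonglongrightarrow> lim X"
    using LIMSEQ_subseq_LIMSEQ[OF L d_strict] by (simp add: o_def)
  have q: "(\<lambda>k. (real k + 2) / (real k + 1)) \<longlonglongrightarrow> 1" by real_asymp
  have B: "(\<lambda>k. (1 / c) * ((real k + 2) / (real k + 1))) \<longlonglongrightarrow> 1 / c"
    using tendsto_mult[OF tendsto_const[of "1/c"] q] unfolding mult_1_right .
  have le: "X (d (Suc (Suc k))) \<le> (1 / c) * ((real k + 2) / (real k + 1))" for k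
  proof -
    have a: "log 2 (real (alpha_seq (d (Suc (Suc k))))) \<le> real k + 2"
      using log_alpha_le[of "Suc (Suc k)"] by simp
    have "golden_ratio ^ Suc k \<le> real (d (Suc (Suc k)))" using d_ge[of k] by simp
    hence "log 2 (golden_ratio ^ Suc k) \<le> log 2 (real (d (Suc (Suc k))))"
      using gr_gt1 d_pos[of "Suc (Suc k)"] by (subst log_le_cancel_iff) auto
    moreover have "log 2 (golden_ratio ^ Suc k) = real (Suc k) * c"
      unfolding c_def by (rule log_nat_power) (use gr_gt1 in simp)
    ultimately have b: "(real k + 1) * c \<le> log 2 (real (d (Suc (Suc k))))"
      by (simp add: algebra_simps)
    have bp: "(real k + 1) * c > 0" using c by simp
    have "X (d (Suc (Suc k))) \<le> (real k + 2) / ((real k + 1) * c)"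
      unfolding X_def by (rule frac_le) (use a b bp in auto)
    thus ?thesis by (simp add: field_simps)
  qed
  have "lim X \<le> 1 / c"
    by (rule LIMSEQ_le[OF L2 B]) (use le in auto)
  moreover have "1 / c = log golden_ratio 2" by (simp add: c_def log_def)
  ultimately show ?thesis by (simp add: X_def)
qed


end
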